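(* Consider the planar system $$\frac{dC}{dt} = 1 + m_1\frac{CL}{1+L} - m_2\frac{CL}{1+m_3C} - m_4C,\qquad \frac{dL}{dt} = L - m_5 CL,$$ with positive parameters $m_1,\dots,m_5$, and its equilibria $E_1=(1/m_4,0)$, $E_2=(1/m_5,L_2)$, $E_3=(1/m_5,L_3)$, where $L_2=\frac{-b-\sqrt{\Delta}}{2a}$, $L_3=\frac{-b+\sqrt{\Delta}}{2a}$ with $a=-\frac{m_2}{1+m_3/m_5}$, $b=m_1+m_5-m_4-\frac{m_2}{1+m_3/m_5}$, $c=m_5-m_4$, $\Delta=b^2-4ac$. The equilibria undergo a transcritical bifurcation at $m_4=m_5$: - when $m_2>m_1(1+m_3/m_5)$, $E_1$ and $E_2$ undergo a transcritical bifurcation; - when $m_2<m_1(1+m_3/m_5)$, $E_1$ and $E_3$ undergo a transcritical bifurcation.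
   Context: Nondimensional model of CAR-T cells $C$ and lymphoma cells $L$. $E_1$ is the tumor-free equilibrium; $E_2,E_3$ are the coexistence equilibria, whose $L$-coordinates are the roots of $aL^2+bL+c=0$. *)

theory Defs
  imports "HOL-Analysis.Analysis"
begin

text \<open>Eigenvalues (over the complex numbers) of a linear map of the plane,
  i.e. of the 2x2 matrix with columns D(1,0) and D(0,1).\<close>
definition eigvals2 :: "(real \<times> real \<Rightarrow> real \<times> real) \<Rightarrow> complex set" where
  "eigvals2 D = {z. (complex_of_real (fst (D (1,0))) - z) * (complex_of_real (snd (D (0,1))) - z)
                     - complex_of_real (fst (D (0,1))) * complex_of_real (snd (D (1,0))) = 0}"

definition lin_stable :: "(real \<times> real \<Rightarrow> real \<times> real) \<Rightarrow> real \<times> real \<Rightarrow> bool" where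
  "lin_stable F x \<longleftrightarrow> (\<exists>D. (F has_derivative D) (at x) \<and> (\<forall>z\<in>eigvals2 D. Re z < 0))"

definition lin_unstable :: "(real \<times> real \<Rightarrow> real \<times> real) \<Rightarrow> real \<times> real \<Rightarrow> bool" where
  "lin_unstable F x \<longleftrightarrow> (\<exists>D. (F has_derivative D) (at x) \<and> (\<exists>z\<in>eigvals2 D. Re z > 0))"

definition transcritical ::
  "(real \<Rightarrow> real \<times> real \<Rightarrow> real \<times> real) \<Rightarrow> real \<Rightarrow> (real \<Rightarrow> real \<times> real) \<Rightarrow> (real \<Rightarrow> real \<times> real) \<Rightarrow> bool" where
  "transcritical F mu0 x1 x2 \<longleftrightarrow>
     (\<exists>\<delta>>0.
        (\<forall>mu. \<bar>mu - mu0\<bar> < \<delta> \<longrightarrow> F mu (x1 mu) = (0,0) \<and> F mu (x2 mu) = (0,0)) \<and>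
        continuous_on {mu0 - \<delta> <..< mu0 + \<delta>} x1 \<and>
        continuous_on {mu0 - \<delta> <..< mu0 + \<delta>} x2 \<and>
        x1 mu0 = x2 mu0 \<and>
        (\<forall>mu. 0 < \<bar>mu - mu0\<bar> \<and> \<bar>mu - mu0\<bar> < \<delta> \<longrightarrow> x1 mu \<noteq> x2 mu) \<and>
        (((\<forall>mu\<in>{mu0 - \<delta> <..< mu0}. lin_stable (F mu) (x1 mu) \<and> lin_unstable (F mu) (x2 mu)) \<and>
          (\<forall>mu\<in>{mu0 <..< mu0 + \<delta>}. lin_unstable (F mu) (x1 mu) \<and> lin_stable (F mu) (x2 mu)))
         \<or>
         ((\<forall>mu\<in>{mu0 - \<delta> <..< mu0}. lin_unstable (F mu) (x1 mu) \<and> lin_stable (F mu) (x2 mu)) \<and>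
          (\<forall>mu\<in>{mu0 <..< mu0 + \<delta>}. lin_stable (F mu) (x1 mu) \<and> lin_unstable (F mu) (x2 mu)))))"

text \<open>The CAR-T / lymphoma vector field (C, L), with m4 as the bifurcation parameter.\<close>
definition cart_field :: "real \<Rightarrow> real \<Rightarrow> real \<Rightarrow> real \<Rightarrow> real \<Rightarrow> real \<times> real \<Rightarrow> real \<times> real" where
  "cart_field m1 m2 m3 m5 m4 = (\<lambda>(C, L).
     (1 + m1 * C * L / (1 + L) - m2 * C * L / (1 + m3 * C) - m4 * C,
      L - m5 * C * L))"

definition coef_a :: "real \<Rightarrow> real \<Rightarrow> real \<Rightarrow> real \<Rightarrow> real \<Rightarrow> real" where
  "coef_a m1 m2 m3 m5 m4 = - m2 / (1 + m3 / m5)"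

definition coef_b :: "real \<Rightarrow> real \<Rightarrow> real \<Rightarrow> real \<Rightarrow> real \<Rightarrow> real" where
  "coef_b m1 m2 m3 m5 m4 = m1 + m5 - m4 - m2 / (1 + m3 / m5)"

definition coef_c :: "real \<Rightarrow> real \<Rightarrow> real \<Rightarrow> real \<Rightarrow> real \<Rightarrow> real" where
  "coef_c m1 m2 m3 m5 m4 = m5 - m4"

definition discr :: "real \<Rightarrow> real \<Rightarrow> real \<Rightarrow> real \<Rightarrow> real \<Rightarrow> real" where
  "discr m1 m2 m3 m5 m4 = (coef_b m1 m2 m3 m5 m4)^2 - 4 * coef_a m1 m2 m3 m5 m4 * coef_c m1 m2 m3 m5 m4"

definition L2 :: "real \<Rightarrow> real \<Rightarrow> real \<Rightarrow> real \<Rightarrow> real \<Rightarrow> real" where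
  "L2 m1 m2 m3 m5 m4 = (- coef_b m1 m2 m3 m5 m4 - sqrt (discr m1 m2 m3 m5 m4)) / (2 * coef_a m1 m2 m3 m5 m4)"

definition L3 :: "real \<Rightarrow> real \<Rightarrow> real \<Rightarrow> real \<Rightarrow> real \<Rightarrow> real" where
  "L3 m1 m2 m3 m5 m4 = (- coef_b m1 m2 m3 m5 m4 + sqrt (discr m1 m2 m3 m5 m4)) / (2 * coef_a m1 m2 m3 m5 m4)"

definition E1 :: "real \<Rightarrow> real \<times> real" where
  "E1 m4 = (1 / m4, 0)"

definition E2 :: "real \<Rightarrow> real \<Rightarrow> real \<Rightarrow> real \<Rightarrow> real \<Rightarrow> real \<times> real" where
  "E2 m1 m2 m3 m5 m4 = (1 / m5, L2 m1 m2 m3 m5 m4)"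

definition E3 :: "real \<Rightarrow> real \<Rightarrow> real \<Rightarrow> real \<Rightarrow> real \<Rightarrow> real \<times> real" where
  "E3 m1 m2 m3 m5 m4 = (1 / m5, L3 m1 m2 m3 m5 m4)"

end

theory Submission
  imports Defs
begin

lemma aux1:
  fixes u v L C m1 m2 m3 m4 a b :: real
  assumes "u \<noteq> 0" "v \<noteq> 0" "u = 1 + L" "v = 1 + m3 * C"
  shows "(m1 * C * b + m1 * a * L) / u - m1 * C * L * (inverse u * b * inverse u) -
           ((m2 * C * b + m2 * a * L) / v - m2 * C * L * (inverse v * (m3 * a) * inverse v)) - m4 * a =
           (m1 * L / u - m2 * L / v^2 - m4) * a + (m1 * C / u^2 - m2 * C / v) * b"
proof -
  have "(m1 * C * b + m1 * a * L) / u - m1 * C * L * (inverse u * b * inverse u) = m1*C*b*(u - L)/u^2 + m1*a*L/u"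
    using assms(1) by (simp add: field_simps power2_eq_square)
  also have "\<dots> = m1*C*b/u^2 + m1*a*L/u" using assms(3) by simp
  finally have 1: "(m1 * C * b + m1 * a * L) / u - m1 * C * L * (inverse u * b * inverse u) = m1*C*b/u^2 + m1*a*L/u" .
  have "(m2 * C * b + m2 * a * L) / v - m2 * C * L * (inverse v * (m3 * a) * inverse v) = m2*C*b/v + m2*a*L*(v - m3*C)/v^2"
    using assms(2) by (simp add: field_simps power2_eq_square)
  also have "\<dots> = m2*C*b/v + m2*a*L/v^2" using assms(4) by simp
  finally have 2: "(m2 * C * b + m2 * a * L) / v - m2 * C * L * (inverse v * (m3 * a) * inverse v) = m2*C*b/v + m2*a*L/v^2" .
  show ?thesis unfolding 1 2 by (simp add: algebra_simps)
qed

lemma cart_deriv: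
  assumes "1 + L \<noteq> 0" "1 + m3*C \<noteq> 0"
  shows "(cart_field m1 m2 m3 m5 m4 has_derivative
     (\<lambda>(h,k). ((m1*L/(1+L) - m2*L/(1+m3*C)^2 - m4)*h + (m1*C/(1+L)^2 - m2*C/(1+m3*C))*k,
               (-m5*L)*h + (1 - m5*C)*k))) (at (C,L))"
proof -
  have e: "cart_field m1 m2 m3 m5 m4 = (\<lambda>x. (1 + m1 * fst x * snd x / (1 + snd x) - m2 * fst x * snd x / (1 + m3 * fst x) - m4 * fst x,
      snd x - m5 * fst x * snd x))"
    by (auto simp: cart_field_def fun_eq_iff)
  show ?thesis unfolding e
    apply (rule has_derivative_eq_rhs)
     apply (rule derivative_eq_intros | simp add: assms)+
    using assms apply (auto simp: fun_eq_iff intro!: aux1)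
    apply (simp add: algebra_simps)
    done
qed

lemma eig_set: "eigvals2 (\<lambda>(h,k). (P*h+Q*k, R*h+S*k)) = {z. (complex_of_real P - z) * (complex_of_real S - z) - complex_of_real Q * complex_of_real R = 0}"
  by (simp add: eigvals2_def)

lemma eig_stable:
  fixes P Q R S :: real
  assumes "P + S < 0" "P*S - Q*R > 0"
  shows "\<forall>z\<in>eigvals2 (\<lambda>(h,k). (P*h+Q*k, R*h+S*k)). Re z < 0"
proof
  fix z assume "z \<in> eigvals2 (\<lambda>(h,k). (P*h+Q*k, R*h+S*k))"
  hence eq: "(complex_of_real P - z) * (complex_of_real S - z) - complex_of_real Q * complex_of_real R = 0"
    by (simp add: eig_set)
  define x where "x = Re z"
  define y where "y = Im z"
  have re: "(P - x) * (S - x) - y*y - Q*R = 0" using arg_cong[OF eq, of Re] by (simp add: x_def y_def)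
  have im: "y * (P + S - 2*x) = 0" using arg_cong[OF eq, of Im] by (simp add: x_def y_def algebra_simps)
  show "Re z < 0"
  proof (rule ccontr)
    assume "\<not> Re z < 0"
    hence x0: "x \<ge> 0" by (simp add: x_def)
    hence "P + S - 2*x \<noteq> 0" using assms by linarith
    hence "y = 0" using im by simp
    hence "x*x - x*(P+S) + (P*S - Q*R) = 0" using re by (simp add: algebra_simps)
    moreover have "x*x \<ge> 0" "- x*(P+S) \<ge> 0" using x0 assms(1)
      by (auto simp: mult_nonneg_nonpos)
    ultimately show False using assms(2) by linarith
  qed
qed

lemma eig_unstable:
  fixes P Q R S :: real
  assumes "P*S - Q*R < 0"
  shows "\<exists>z\<in>eigvals2 (\<lambda>(h,k). (P*h+Q*k, R*h+S*k)). Re z > 0"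
proof -
  define T where "T = P + S"
  define D where "D = P*S - Q*R"
  define w where "w = sqrt (T^2 - 4*D)"
  have pos: "T^2 - 4*D \<ge> 0" using assms by (simp add: D_def) (smt (verit) zero_le_power2)
  have w2: "w^2 = T^2 - 4*D" using pos by (simp add: w_def)
  have "w > sqrt (T^2)" unfolding w_def using assms by (intro real_sqrt_less_mono) (simp add: D_def)
  hence wT: "w > -T" by simp
  define x where "x = (T + w)/2"
  have "x*x - T*x + D = 0" unfolding x_def using w2 by (simp add: field_simps power2_eq_square)
  hence "(P - x) * (S - x) - Q*R = 0" by (simp add: T_def D_def algebra_simps)
  hence "(complex_of_real P - complex_of_real x) * (complex_of_real S - complex_of_real x) - complex_of_real Q * complex_of_real R = 0"
    by (metis of_real_0 of_real_diff of_real_mult)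
  moreover have "Re (complex_of_real x) > 0" using wT by (simp add: x_def)
  ultimately show ?thesis by (auto simp: eig_set)
qed

lemma detlem:
  fixes m1 m2 m3 m5 k L mu P :: real
  assumes pos: "m5 > 0" and kdef: "k = m2/(1+m3/m5)" and L1: "1 + L > 0"
    and f5: "m1*L/(1+L) = k*L - (m5 - mu)"
  shows "P * (1 - m5*(1/m5)) - (m1*(1/m5)/(1+L)^2 - m2*(1/m5)/(1+m3*(1/m5))) * (-m5*L)
         = - ((m5 - mu) + k*L^2)/(1+L)"
proof -
  have S0: "1 - m5*(1/m5) = 0" using pos by simp
  have Q: "m1*(1/m5)/(1+L)^2 - m2*(1/m5)/(1+m3*(1/m5)) = (m1/(1+L)^2 - k)/m5"
    by (simp add: kdef diff_divide_distrib mult.commute)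
  have QR0: "(X - k)/m5 * (-m5*L) = -(X*L - k*L)" for X
    using pos by (simp add: field_simps)
  have XL: "m1/(1+L)^2*L = m1*L/(1+L)/(1+L)" by (simp add: power2_eq_square)
  have QR: "(m1/(1+L)^2 - k)/m5 * (-m5*L) = -(m1*L/(1+L)/(1+L) - k*L)"
    unfolding QR0 XL ..
  have "m1*L/(1+L)/(1+L) - k*L = (k*L - (m5 - mu))/(1+L) - k*L" using f5 by simp
  also have "\<dots> = - ((m5 - mu) + k*L^2)/(1+L)" using L1 by (simp add: field_simps power2_eq_square)
  finally show ?thesis unfolding S0 Q QR by simp
qed


lemma E1_stab:
  fixes m1 m2 m3 m5 mu :: real
  assumes "m3 > 0" "0 < mu" "mu < m5"
  shows "lin_stable (cart_field m1 m2 m3 m5 mu) (E1 mu)"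
proof -
  have "1 + m3 * (1/mu) > 0" using assms by (simp add: add_pos_pos)
  hence D: "(cart_field m1 m2 m3 m5 mu has_derivative
     (\<lambda>(h,k). ((m1*0/(1+0) - m2*0/(1+m3*(1/mu))^2 - mu)*h + (m1*(1/mu)/(1+0)^2 - m2*(1/mu)/(1+m3*(1/mu)))*k,
               (-m5*0)*h + (1 - m5*(1/mu))*k))) (at (1/mu,0))"
    by (intro cart_deriv) auto
  have "m5/mu > 1" using less_divide_eq_1_pos[of mu m5] assms by linarith
  moreover have "m5*(1/mu) = m5/mu" by simp
  ultimately have s: "1 - m5*(1/mu) < 0" by linarith
  have p: "m1*0/(1+0) - m2*0/(1+m3*(1/mu))^2 - mu = -mu" by simp
  have p2: "0/(1+0) - 0/(1+m3*(1/mu))^2 - mu = -mu" by simp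
  have "(m1*0/(1+0) - m2*0/(1+m3*(1/mu))^2 - mu) + (1 - m5*(1/mu)) < 0" unfolding p using s assms by linarith
  moreover have "(m1*0/(1+0) - m2*0/(1+m3*(1/mu))^2 - mu) * (1 - m5*(1/mu)) - (m1*(1/mu)/(1+0)^2 - m2*(1/mu)/(1+m3*(1/mu))) * (-m5*0) > 0"
    unfolding mult_zero_right diff_zero p2 using mult_neg_neg[OF _ s, of "-mu"] assms by linarith
  ultimately have "\<forall>z\<in>eigvals2 (\<lambda>(h,k). ((m1*0/(1+0) - m2*0/(1+m3*(1/mu))^2 - mu)*h + (m1*(1/mu)/(1+0)^2 - m2*(1/mu)/(1+m3*(1/mu)))*k,
               (-m5*0)*h + (1 - m5*(1/mu))*k)). Re z < 0" by (rule eig_stable)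
  with D show ?thesis unfolding lin_stable_def E1_def by (intro exI conjI)
qed

lemma E1_unstab:
  fixes m1 m2 m3 m5 mu :: real
  assumes "m3 > 0" "0 < m5" "m5 < mu"
  shows "lin_unstable (cart_field m1 m2 m3 m5 mu) (E1 mu)"
proof -
  have mu: "mu > 0" using assms by simp
  have "1 + m3 * (1/mu) > 0" using assms mu by (simp add: add_pos_pos)
  hence D: "(cart_field m1 m2 m3 m5 mu has_derivative
     (\<lambda>(h,k). ((m1*0/(1+0) - m2*0/(1+m3*(1/mu))^2 - mu)*h + (m1*(1/mu)/(1+0)^2 - m2*(1/mu)/(1+m3*(1/mu)))*k,
               (-m5*0)*h + (1 - m5*(1/mu))*k))) (at (1/mu,0))"
    by (intro cart_deriv) auto
  have "m5/mu < 1" using divide_less_eq_1_pos[of mu m5] assms mu by linarith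
  moreover have "m5*(1/mu) = m5/mu" by simp
  ultimately have s: "1 - m5*(1/mu) > 0" by linarith
  have p: "m1*0/(1+0) - m2*0/(1+m3*(1/mu))^2 - mu = -mu" by simp
  have p2: "0/(1+0) - 0/(1+m3*(1/mu))^2 - mu = -mu" by simp
  have "(m1*0/(1+0) - m2*0/(1+m3*(1/mu))^2 - mu) * (1 - m5*(1/mu)) - (m1*(1/mu)/(1+0)^2 - m2*(1/mu)/(1+m3*(1/mu))) * (-m5*0) < 0"
    unfolding mult_zero_right diff_zero p2 using mult_neg_pos[OF _ s, of "-mu"] mu by linarith
  then have "\<exists>z\<in>eigvals2 (\<lambda>(h,k). ((m1*0/(1+0) - m2*0/(1+m3*(1/mu))^2 - mu)*h + (m1*(1/mu)/(1+0)^2 - m2*(1/mu)/(1+m3*(1/mu)))*k,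
               (-m5*0)*h + (1 - m5*(1/mu))*k)). Re z > 0" by (rule eig_unstable)
  with D show ?thesis unfolding lin_unstable_def E1_def by (intro exI conjI)
qed

lemma x2_unstab:
  fixes m1 m2 m3 m5 mu k L :: real
  assumes pos: "m3 > 0" "m5 > 0" and kdef: "k = m2/(1+m3/m5)" and L1: "1 + L > 0"
    and f5: "m1*L/(1+L) = k*L - (m5 - mu)" and mu: "mu < m5" and k0: "k \<ge> 0"
  shows "lin_unstable (cart_field m1 m2 m3 m5 mu) (1/m5, L)"
proof -
  have "1 + m3 * (1/m5) > 0" using pos by (simp add: add_pos_pos)
  hence D: "(cart_field m1 m2 m3 m5 mu has_derivative
     (\<lambda>(h,k). ((m1*L/(1+L) - m2*L/(1+m3*(1/m5))^2 - mu)*h + (m1*(1/m5)/(1+L)^2 - m2*(1/m5)/(1+m3*(1/m5)))*k,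
               (-m5*L)*h + (1 - m5*(1/m5))*k))) (at (1/m5,L))"
    using L1 by (intro cart_deriv) auto
  note det = detlem[OF pos(2) kdef L1 f5, of "m1*L/(1+L) - m2*L/(1+m3*(1/m5))^2 - mu"]
  have "k*L^2 \<ge> 0" using k0 by simp
  hence dneg: "- ((m5 - mu) + k*L^2)/(1+L) < 0" using mu L1 by (intro divide_neg_pos; linarith)
  have "(m1*L/(1+L) - m2*L/(1+m3*(1/m5))^2 - mu) * (1 - m5*(1/m5)) - (m1*(1/m5)/(1+L)^2 - m2*(1/m5)/(1+m3*(1/m5))) * (-m5*L) < 0"
    using det dneg by linarith
  then have "\<exists>z\<in>eigvals2 (\<lambda>(h,k). ((m1*L/(1+L) - m2*L/(1+m3*(1/m5))^2 - mu)*h + (m1*(1/m5)/(1+L)^2 - m2*(1/m5)/(1+m3*(1/m5)))*k,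
               (-m5*L)*h + (1 - m5*(1/m5))*k)). Re z > 0" by (rule eig_unstable)
  with D show ?thesis unfolding lin_unstable_def by (intro exI conjI)
qed

lemma x2_stab:
  fixes m1 m2 m3 m5 mu k L :: real
  assumes pos: "m3 > 0" "m5 > 0" and kdef: "k = m2/(1+m3/m5)" and L1: "1 + L > 0"
    and f5: "m1*L/(1+L) = k*L - (m5 - mu)" and mu: "k*L^2 < mu - m5" and k0: "k > 0"
    and kL: "k*\<bar>L\<bar> < m5"
  shows "lin_stable (cart_field m1 m2 m3 m5 mu) (1/m5, L)"
proof -
  have "1 + m3 * (1/m5) > 0" using pos by (simp add: add_pos_pos)
  hence D: "(cart_field m1 m2 m3 m5 mu has_derivative
     (\<lambda>(h,k). ((m1*L/(1+L) - m2*L/(1+m3*(1/m5))^2 - mu)*h + (m1*(1/m5)/(1+L)^2 - m2*(1/m5)/(1+m3*(1/m5)))*k,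
               (-m5*L)*h + (1 - m5*(1/m5))*k))) (at (1/m5,L))"
    using L1 by (intro cart_deriv) auto
  note det = detlem[OF pos(2) kdef L1 f5, of "m1*L/(1+L) - m2*L/(1+m3*(1/m5))^2 - mu"]
  have "(m5 - mu) + k*L^2 < 0" using mu by simp
  hence detpos: "- ((m5 - mu) + k*L^2)/(1+L) > 0" using L1 by (simp add: divide_pos_pos)
  define th where "th = 1/(1+m3/m5)"
  have theta: "0 < th" "th < 1" using pos by (auto simp: th_def field_simps)
  have m2k: "m2*L/(1+m3*(1/m5))^2 = k*th*L" by (simp add: kdef th_def power2_eq_square)
  have S0: "1 - m5*(1/m5) = 0" using pos by simp
  have tr: "(m1*L/(1+L) - m2*L/(1+m3*(1/m5))^2 - mu) + (1 - m5*(1/m5)) = k*(L*(1-th)) - m5"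
    unfolding m2k f5 S0 by (simp add: algebra_simps)
  have "L*(1-th) \<le> \<bar>L\<bar>*(1-th)" using theta by (intro mult_right_mono) auto
  also have "\<dots> \<le> \<bar>L\<bar>" using theta by (intro mult_left_le) auto
  finally have "k*(L*(1-th)) \<le> k*\<bar>L\<bar>" using k0 by (intro mult_left_mono) auto
  hence trneg: "k*(L*(1-th)) - m5 < 0" using kL by linarith
  have "(m1*L/(1+L) - m2*L/(1+m3*(1/m5))^2 - mu) + (1 - m5*(1/m5)) < 0" using tr trneg by linarith
  moreover have "(m1*L/(1+L) - m2*L/(1+m3*(1/m5))^2 - mu) * (1 - m5*(1/m5)) - (m1*(1/m5)/(1+L)^2 - m2*(1/m5)/(1+m3*(1/m5))) * (-m5*L) > 0"
    using det detpos by linarith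
  ultimately have "\<forall>z\<in>eigvals2 (\<lambda>(h,k). ((m1*L/(1+L) - m2*L/(1+m3*(1/m5))^2 - mu)*h + (m1*(1/m5)/(1+L)^2 - m2*(1/m5)/(1+m3*(1/m5)))*k,
               (-m5*L)*h + (1 - m5*(1/m5))*k)). Re z < 0" by (rule eig_stable)
  with D show ?thesis unfolding lin_stable_def by (intro exI conjI)
qed


lemma main_gen:
  fixes m1 m2 m3 m5 k b0 d0 :: real and r :: "real \<Rightarrow> real"
  assumes pos: "m1 > 0" "m2 > 0" "m3 > 0" "m5 > 0"
    and kdef: "k = m2/(1+m3/m5)" and b0def: "b0 = m1 - k" and b0ne: "b0 \<noteq> 0" and d0: "d0 > 0"
    and cont: "continuous_on {m5-d0<..<m5+d0} r" and r0: "r m5 = 0"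
    and quad: "\<And>mu. \<bar>mu - m5\<bar> < d0 \<Longrightarrow> -k*(r mu)^2 + (b0 + (m5-mu))*r mu + (m5-mu) = 0"
    and bnd: "\<And>mu. \<bar>mu - m5\<bar> < d0 \<Longrightarrow> \<bar>r mu\<bar> \<le> 4*\<bar>m5-mu\<bar>/\<bar>b0\<bar>"
  shows "transcritical (cart_field m1 m2 m3 m5) m5 E1 (\<lambda>mu. (1/m5, r mu))"
proof -
  have "1 + m3/m5 > 0" using pos by (simp add: add_pos_pos)
  hence k0: "k > 0" using pos by (simp add: kdef)
  have ab0: "\<bar>b0\<bar> > 0" using b0ne by simp
  define \<delta> where "\<delta> = min d0 (min (m5/2) (min (\<bar>b0\<bar>/8) (min (\<bar>b0\<bar>*m5/(8*k)) (b0^2/(32*k)))))"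
  have d: "\<delta> > 0" using d0 pos k0 ab0 by (simp add: \<delta>_def)
  have dle: "\<delta> \<le> d0" "\<delta> \<le> m5/2" "\<delta> \<le> \<bar>b0\<bar>/8" "\<delta> \<le> \<bar>b0\<bar>*m5/(8*k)" "\<delta> \<le> b0^2/(32*k)"
    unfolding \<delta>_def by (linarith | simp only: min.coboundedI1 min.coboundedI2)+
  have sm: "4*\<delta>/\<bar>b0\<bar> \<le> 1/2" using dle(3) ab0 by (simp add: field_simps)
  have sm2: "k*(4*\<delta>/\<bar>b0\<bar>) \<le> m5/2" using dle(4) ab0 k0 by (simp add: field_simps)
  have sm3: "16*k*\<delta>/b0^2 \<le> 1/2" using dle(5) ab0 k0 by (simp add: field_simps)
  have theta: "0 < 1/(1+m3/m5)" "1/(1+m3/m5) < 1" using pos by (auto simp: field_simps)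
  have mkey: "m2/(1+m3/m5)^2 = k * (1/(1+m3/m5))" by (simp add: kdef power2_eq_square)
  have facts: "\<bar>r mu\<bar> \<le> 1/2 \<and> k*\<bar>r mu\<bar> < m5 \<and> (mu \<noteq> m5 \<longrightarrow> k*(r mu)^2 < \<bar>m5-mu\<bar>) \<and> mu > 0
      \<and> m1*r mu/(1 + r mu) = k * r mu - (m5 - mu)"
    if mu: "\<bar>mu - m5\<bar> < \<delta>" for mu
  proof -
    define L where "L = r mu"
    define e where "e = m5 - mu"
    have ae: "\<bar>e\<bar> < \<delta>" using mu by (simp add: e_def abs_minus_commute)
    have q: "-k*L^2 + (b0 + e)*L + e = 0" using quad[of mu] mu dle(1) by (simp add: L_def e_def)
    have bL: "\<bar>L\<bar> \<le> 4*\<bar>e\<bar>/\<bar>b0\<bar>" using bnd[of mu] mu dle(1) by (simp add: L_def e_def)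
    have "4*\<bar>e\<bar>/\<bar>b0\<bar> \<le> 4*\<delta>/\<bar>b0\<bar>" using ae ab0 by (simp add: divide_right_mono)
    hence bL2: "\<bar>L\<bar> \<le> 4*\<delta>/\<bar>b0\<bar>" using bL by linarith
    have f1: "\<bar>L\<bar> \<le> 1/2" using bL2 sm by linarith
    have "k*\<bar>L\<bar> \<le> k*(4*\<delta>/\<bar>b0\<bar>)" using bL2 k0 by (intro mult_left_mono) auto
    hence f2: "k*\<bar>L\<bar> < m5" using sm2 pos by linarith
    have f3: "k*L^2 < \<bar>e\<bar>" if "e \<noteq> 0"
    proof -
      have "L^2 = \<bar>L\<bar>^2" by simp
      also have "\<dots> \<le> (4*\<bar>e\<bar>/\<bar>b0\<bar>)^2" using bL by (intro power_mono) auto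
      finally have "k*L^2 \<le> k*(4*\<bar>e\<bar>/\<bar>b0\<bar>)^2" using k0 by (simp add: mult_left_mono)
      also have "\<dots> = \<bar>e\<bar> * (16*k*\<bar>e\<bar>/b0^2)" by (simp add: power2_eq_square field_simps)
      also have "\<dots> \<le> \<bar>e\<bar> * (16*k*\<delta>/b0^2)"
        using ae k0 ab0 by (intro mult_left_mono divide_right_mono) auto
      also have "\<dots> \<le> \<bar>e\<bar> * (1/2)" using sm3 by (intro mult_left_mono) auto
      also have "\<dots> < \<bar>e\<bar>" using that by simp
      finally show ?thesis .
    qed
    have f4: "mu > 0" using mu dle(2) by linarith
    have "1 + L \<noteq> 0" using f1 by linarith
    have "m1*L = (k*L - e)*(1+L)" using q by (simp add: b0def algebra_simps power2_eq_square)
    hence f5: "m1*L/(1+L) = k*L - e" using \<open>1 + L \<noteq> 0\<close> by (simp add: field_simps)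
    show ?thesis using f1 f2 f3 f4 f5 by (simp add: L_def e_def)
  qed
  show ?thesis
    unfolding transcritical_def
  proof (intro exI[of _ \<delta>] conjI allI impI ballI)
    show "\<delta> > 0" by (fact d)
  next
    fix mu assume mu: "\<bar>mu - m5\<bar> < \<delta>"
    then show "cart_field m1 m2 m3 m5 mu (E1 mu) = (0,0)"
      using facts[OF mu] by (simp add: cart_field_def E1_def)
  next
    fix mu assume mu: "\<bar>mu - m5\<bar> < \<delta>"
    note f = facts[OF mu]
    have "1 + r mu \<noteq> 0" using f by linarith
    have t1: "m2 * (1/m5) * r mu / (1 + m3 * (1/m5)) = k * r mu / m5" by (simp add: kdef)
    have t2: "m1 * (1/m5) * r mu / (1 + r mu) = (m1 * r mu / (1 + r mu)) / m5" by simp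
    have "1 + m1 * (1/m5) * r mu / (1 + r mu) - m2 * (1/m5) * r mu / (1 + m3 * (1/m5)) - mu * (1/m5)
       = 1 + (k * r mu - (m5 - mu)) / m5 - k * r mu / m5 - mu / m5"
      unfolding t1 t2 using f by simp
    also have "\<dots> = 0" using pos by (simp add: field_simps)
    finally show "cart_field m1 m2 m3 m5 mu (1/m5, r mu) = (0,0)"
      using pos by (simp add: cart_field_def)
  next
    have "{m5 - \<delta><..<m5 + \<delta>} \<subseteq> {0<..}" using dle(2) pos by auto
    hence "\<forall>x\<in>{m5 - \<delta><..<m5 + \<delta>}. x \<noteq> 0" by auto
    hence "continuous_on {m5 - \<delta><..<m5 + \<delta>} (\<lambda>mu. (1/mu, 0::real))"
      by (intro continuous_intros) auto
    moreover have "E1 = (\<lambda>mu. (1/mu, 0::real))" by (simp add: E1_def[abs_def])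
    ultimately show "continuous_on {m5 - \<delta><..<m5 + \<delta>} E1" by metis
  next
    have "continuous_on {m5 - \<delta><..<m5 + \<delta>} r"
      by (rule continuous_on_subset[OF cont]) (use dle(1) in auto)
    thus "continuous_on {m5 - \<delta><..<m5 + \<delta>} (\<lambda>mu. (1/m5, r mu))"
      by (intro continuous_intros)
  next
    show "E1 m5 = (1/m5, r m5)" by (simp add: E1_def r0)
  next
    fix mu assume "0 < \<bar>mu - m5\<bar> \<and> \<bar>mu - m5\<bar> < \<delta>"
    hence "mu \<noteq> m5" "mu > 0" using dle(2) by auto
    thus "E1 mu \<noteq> (1/m5, r mu)" using pos by (auto simp: E1_def)
  next
    show "((\<forall>mu\<in>{m5 - \<delta><..<m5}. lin_stable (cart_field m1 m2 m3 m5 mu) (E1 mu) \<and> lin_unstable (cart_field m1 m2 m3 m5 mu) (1/m5, r mu)) \<and>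
          (\<forall>mu\<in>{m5<..<m5 + \<delta>}. lin_unstable (cart_field m1 m2 m3 m5 mu) (E1 mu) \<and> lin_stable (cart_field m1 m2 m3 m5 mu) (1/m5, r mu)))
         \<or> ((\<forall>mu\<in>{m5 - \<delta><..<m5}. lin_unstable (cart_field m1 m2 m3 m5 mu) (E1 mu) \<and> lin_stable (cart_field m1 m2 m3 m5 mu) (1/m5, r mu)) \<and>
          (\<forall>mu\<in>{m5<..<m5 + \<delta>}. lin_stable (cart_field m1 m2 m3 m5 mu) (E1 mu) \<and> lin_unstable (cart_field m1 m2 m3 m5 mu) (1/m5, r mu)))"
    proof (rule disjI1, intro conjI ballI)
      fix mu assume "mu \<in> {m5 - \<delta><..<m5}"
      hence mu: "\<bar>mu - m5\<bar> < \<delta>" "mu < m5" by auto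
      have mu0: "mu > 0" using facts[OF mu(1)] by simp
      show "lin_stable (cart_field m1 m2 m3 m5 mu) (E1 mu)" by (rule E1_stab[OF pos(3) mu0 mu(2)])
    next
      fix mu assume "mu \<in> {m5 - \<delta><..<m5}"
      hence mu: "\<bar>mu - m5\<bar> < \<delta>" "mu < m5" by auto
      note f = facts[OF mu(1)]
      have L1: "1 + r mu > 0" using f by linarith
      have f5: "m1 * r mu/(1 + r mu) = k * r mu - (m5-mu)" using f by blast
      show "lin_unstable (cart_field m1 m2 m3 m5 mu) (1/m5, r mu)"
        by (rule x2_unstab[OF pos(3) pos(4) kdef L1 f5 mu(2)]) (use k0 in simp)
    next
      fix mu assume "mu \<in> {m5<..<m5 + \<delta>}"
      hence mu: "\<bar>mu - m5\<bar> < \<delta>" "mu > m5" by auto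
      show "lin_unstable (cart_field m1 m2 m3 m5 mu) (E1 mu)" by (rule E1_unstab[OF pos(3) pos(4) mu(2)])
    next
      fix mu assume "mu \<in> {m5<..<m5 + \<delta>}"
      hence mu: "\<bar>mu - m5\<bar> < \<delta>" "mu > m5" by auto
      note f = facts[OF mu(1)]
      have L1: "1 + r mu > 0" using f by linarith
      have f5: "m1 * r mu/(1 + r mu) = k * r mu - (m5-mu)" using f by blast
      have "k * (r mu)^2 < \<bar>m5 - mu\<bar>" using f mu(2) by simp
      hence q: "k * (r mu)^2 < mu - m5" using mu(2) by simp
      have kL: "k * \<bar>r mu\<bar> < m5" using f by blast
      show "lin_stable (cart_field m1 m2 m3 m5 mu) (1/m5, r mu)"
        by (rule x2_stab[OF pos(3) pos(4) kdef L1 f5 q k0 kL])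
    qed
  qed
qed


lemma quad_root:
  fixes a b c s x :: real
  assumes "a \<noteq> 0" "s^2 = b^2 - 4*a*c" "x = (-b + s)/(2*a)"
  shows "a*x^2 + b*x + c = 0"
proof -
  have "a*x^2 + b*x + c = (s^2 - b^2 + 4*a*c)/(4*a)"
    using assms(1) unfolding assms(3) by (simp add: field_simps power2_eq_square)
  also have "\<dots> = 0" using assms(2) by simp
  finally show ?thesis .
qed

lemma disc_pos:
  fixes k b0 e :: real
  assumes k0: "k > 0" and "b0 \<noteq> 0" "\<bar>e\<bar> < \<bar>b0\<bar>/2" "\<bar>e\<bar> < b0^2/(16*k)"
  shows "(b0+e)^2 + 4*k*e > 0" "\<bar>b0 + e\<bar> \<ge> \<bar>b0\<bar>/2"
proof -
  show bb: "\<bar>b0 + e\<bar> \<ge> \<bar>b0\<bar>/2" using assms(3) by linarith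
  have "(\<bar>b0\<bar>/2)^2 \<le> \<bar>b0 + e\<bar>^2" using bb by (intro power_mono) auto
  hence 1: "b0^2/4 \<le> (b0+e)^2" by (simp add: power_divide)
  have "k*\<bar>e\<bar>*16 < b0^2" using assms(4) k0 by (simp add: field_simps)
  moreover have "k*(-\<bar>e\<bar>) \<le> k*e" using k0 by (intro mult_left_mono) auto
  ultimately show "(b0+e)^2 + 4*k*e > 0" using 1 by linarith
qed

lemma abs_bound:
  fixes x y k e b0 :: real
  assumes "k > 0" "b0 \<noteq> 0" "y \<ge> \<bar>b0\<bar>/2" "\<bar>x\<bar> * y = 4*k*\<bar>e\<bar>"
  shows "\<bar>x/(2*k)\<bar> \<le> 4*\<bar>e\<bar>/\<bar>b0\<bar>"
proof -
  have "\<bar>x\<bar> * (\<bar>b0\<bar>/2) \<le> \<bar>x\<bar> * y" using assms(3) by (intro mult_left_mono) auto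
  hence "\<bar>x\<bar> * \<bar>b0\<bar> \<le> 8*k*\<bar>e\<bar>" using assms(4) by linarith
  thus ?thesis using assms(1,2) by (simp add: field_simps abs_divide abs_mult)
qed

lemma case1:
  fixes k b0 e :: real
  assumes k0: "k > 0" and b0: "b0 < 0" and "\<bar>e\<bar> < \<bar>b0\<bar>/2" "\<bar>e\<bar> < b0^2/(16*k)"
  shows "\<bar>(b0 + e + sqrt ((b0+e)^2 + 4*k*e))/(2*k)\<bar> \<le> 4*\<bar>e\<bar>/\<bar>b0\<bar>"
proof -
  note dp = disc_pos[OF k0 _ assms(3,4)]
  define s where "s = sqrt ((b0+e)^2 + 4*k*e)"
  have s0: "s \<ge> 0" and s2: "s^2 = (b0+e)^2 + 4*k*e" using dp b0 by (auto simp: s_def)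
  have "b0 + e < 0" using assms(3) b0 by linarith
  hence y: "s - (b0+e) \<ge> \<bar>b0\<bar>/2" using dp(2) s0 b0 by linarith
  have prod: "(b0 + e + s) * (s - (b0+e)) = 4*k*e" using s2 by (simp add: algebra_simps power2_eq_square)
  have y0: "s - (b0+e) \<ge> 0" using y b0 by simp
  have "\<bar>b0 + e + s\<bar> * (s - (b0+e)) = \<bar>(b0 + e + s) * (s - (b0+e))\<bar>" using y0 by (simp add: abs_mult)
  also have "\<dots> = 4*k*\<bar>e\<bar>" unfolding prod using k0 by (simp add: abs_mult)
  finally have "\<bar>b0 + e + s\<bar> * (s - (b0+e)) = 4*k*\<bar>e\<bar>" .
  from abs_bound[OF k0 _ y this] b0 show ?thesis by (simp add: s_def)
qed

lemma case2:
  fixes k b0 e :: real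
  assumes k0: "k > 0" and b0: "b0 > 0" and "\<bar>e\<bar> < \<bar>b0\<bar>/2" "\<bar>e\<bar> < b0^2/(16*k)"
  shows "\<bar>(b0 + e - sqrt ((b0+e)^2 + 4*k*e))/(2*k)\<bar> \<le> 4*\<bar>e\<bar>/\<bar>b0\<bar>"
proof -
  note dp = disc_pos[OF k0 _ assms(3,4)]
  define s where "s = sqrt ((b0+e)^2 + 4*k*e)"
  have s0: "s \<ge> 0" and s2: "s^2 = (b0+e)^2 + 4*k*e" using dp b0 by (auto simp: s_def)
  have "b0 + e > 0" using assms(3) b0 by linarith
  hence y: "s + (b0+e) \<ge> \<bar>b0\<bar>/2" using dp(2) s0 b0 by linarith
  have prod: "(b0 + e - s) * (s + (b0+e)) = -(4*k*e)" using s2 by (simp add: algebra_simps power2_eq_square)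
  have y0: "s + (b0+e) \<ge> 0" using y b0 by simp
  have "\<bar>b0 + e - s\<bar> * (s + (b0+e)) = \<bar>(b0 + e - s) * (s + (b0+e))\<bar>" using y0 by (simp add: abs_mult)
  also have "\<dots> = 4*k*\<bar>e\<bar>" unfolding prod using k0 by (simp add: abs_mult)
  finally have "\<bar>b0 + e - s\<bar> * (s + (b0+e)) = 4*k*\<bar>e\<bar>" .
  from abs_bound[OF k0 _ y this] b0 show ?thesis by (simp add: s_def)
qed


lemma fr1: "(k::real) \<noteq> 0 \<Longrightarrow> (-p + -q)/(2*(-k)) = (p+q)/(2*k)"
  by (simp add: field_simps)

lemma fr2: "(k::real) \<noteq> 0 \<Longrightarrow> (-p + q)/(2*(-k)) = (p-q)/(2*k)"
  by (simp add: field_simps)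

theorem theorem5:
  fixes m1 m2 m3 m5 :: real
  assumes "m1 > 0" and "m2 > 0" and "m3 > 0" and "m5 > 0"
  shows "(m2 > m1 * (1 + m3 / m5) \<longrightarrow>
            transcritical (cart_field m1 m2 m3 m5) m5 E1 (E2 m1 m2 m3 m5)) \<and>
         (m2 < m1 * (1 + m3 / m5) \<longrightarrow>
            transcritical (cart_field m1 m2 m3 m5) m5 E1 (E3 m1 m2 m3 m5))"
proof -
  define k where "k = m2/(1+m3/m5)"
  define b0 where "b0 = m1 - k"
  have q0: "1 + m3/m5 > 0" using assms by (simp add: add_pos_pos)
  hence k0: "k > 0" using assms by (simp add: k_def)
  have ca: "coef_a m1 m2 m3 m5 mu = -k" for mu by (simp add: coef_a_def k_def)
  have cb: "coef_b m1 m2 m3 m5 mu = b0 + (m5 - mu)" for mu by (simp add: coef_b_def b0_def k_def)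
  have cc: "coef_c m1 m2 m3 m5 mu = m5 - mu" for mu by (simp add: coef_c_def)
  have dd: "discr m1 m2 m3 m5 mu = (b0 + (m5-mu))^2 + 4*k*(m5-mu)" for mu by (simp add: discr_def ca cb cc)
  have L2e: "L2 m1 m2 m3 m5 mu = (- (b0 + (m5-mu)) + - sqrt ((b0 + (m5-mu))^2 + 4*k*(m5-mu)))/(2*(-k))" for mu
    by (simp add: L2_def ca cb dd)
  have L3e: "L3 m1 m2 m3 m5 mu = (- (b0 + (m5-mu)) + sqrt ((b0 + (m5-mu))^2 + 4*k*(m5-mu)))/(2*(-k))" for mu
    by (simp add: L3_def ca cb dd)
  have L2f: "L2 m1 m2 m3 m5 mu = (b0 + (m5-mu) + sqrt ((b0 + (m5-mu))^2 + 4*k*(m5-mu)))/(2*k)" for mu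
    unfolding L2e using k0 by (intro fr1) simp
  have L3f: "L3 m1 m2 m3 m5 mu = (b0 + (m5-mu) - sqrt ((b0 + (m5-mu))^2 + 4*k*(m5-mu)))/(2*k)" for mu
    unfolding L3e using k0 by (intro fr2) simp
  define d0 where "d0 = min (\<bar>b0\<bar>/2) (b0^2/(16*k))"
  have d0le: "\<bar>mu - m5\<bar> < d0 \<Longrightarrow> \<bar>m5 - mu\<bar> < \<bar>b0\<bar>/2 \<and> \<bar>m5 - mu\<bar> < b0^2/(16*k)" for mu
    by (auto simp: d0_def abs_minus_commute)
  have cL2: "continuous_on S (L2 m1 m2 m3 m5)" for S
    unfolding L2f[abs_def] using k0 by (intro continuous_intros) auto
  have cL3: "continuous_on S (L3 m1 m2 m3 m5)" for S
    unfolding L3f[abs_def] using k0 by (intro continuous_intros) auto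
  have quad2: "-k*(L2 m1 m2 m3 m5 mu)^2 + (b0 + (m5-mu))*L2 m1 m2 m3 m5 mu + (m5-mu) = 0"
    if "\<bar>mu - m5\<bar> < d0" for mu
  proof (rule quad_root[OF _ _ L2e])
    show "-k \<noteq> 0" using k0 by simp
    have "(b0 + (m5-mu))^2 + 4*k*(m5-mu) > 0"
    proof -
      have "b0 \<noteq> 0" using d0le[OF that] by auto
      thus ?thesis using disc_pos(1)[OF k0 _ conjunct1[OF d0le[OF that]] conjunct2[OF d0le[OF that]]] by blast
    qed
    thus "(- sqrt ((b0 + (m5-mu))^2 + 4*k*(m5-mu)))^2 = (b0 + (m5-mu))^2 - 4*(-k)*(m5-mu)" by simp
  qed
  have quad3: "-k*(L3 m1 m2 m3 m5 mu)^2 + (b0 + (m5-mu))*L3 m1 m2 m3 m5 mu + (m5-mu) = 0"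
    if "\<bar>mu - m5\<bar> < d0" for mu
  proof (rule quad_root[OF _ _ L3e])
    show "-k \<noteq> 0" using k0 by simp
    have "(b0 + (m5-mu))^2 + 4*k*(m5-mu) > 0"
    proof -
      have "b0 \<noteq> 0" using d0le[OF that] by auto
      thus ?thesis using disc_pos(1)[OF k0 _ conjunct1[OF d0le[OF that]] conjunct2[OF d0le[OF that]]] by blast
    qed
    thus "(sqrt ((b0 + (m5-mu))^2 + 4*k*(m5-mu)))^2 = (b0 + (m5-mu))^2 - 4*(-k)*(m5-mu)" by simp
  qed
  have E2e: "E2 m1 m2 m3 m5 = (\<lambda>mu. (1/m5, L2 m1 m2 m3 m5 mu))" by (rule ext) (simp add: E2_def)
  have E3e: "E3 m1 m2 m3 m5 = (\<lambda>mu. (1/m5, L3 m1 m2 m3 m5 mu))" by (rule ext) (simp add: E3_def)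
  show ?thesis
  proof (intro conjI impI)
    assume h: "m2 > m1 * (1 + m3 / m5)"
    have "k > m1" using h q0 by (simp add: k_def pos_less_divide_eq)
    hence b0n: "b0 < 0" by (simp add: b0_def)
    have d0p: "d0 > 0" using b0n k0 by (simp add: d0_def)
    have bnd: "\<bar>L2 m1 m2 m3 m5 mu\<bar> \<le> 4*\<bar>m5-mu\<bar>/\<bar>b0\<bar>" if "\<bar>mu - m5\<bar> < d0" for mu
      unfolding L2f using case1[OF k0 b0n] d0le[OF that] by blast
    have r0: "L2 m1 m2 m3 m5 m5 = 0" using bnd[of m5] d0p by simp
    show "transcritical (cart_field m1 m2 m3 m5) m5 E1 (E2 m1 m2 m3 m5)"
      unfolding E2e
      by (rule main_gen[OF assms k_def b0_def _ d0p cL2 r0 quad2 bnd]) (use b0n in simp)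
  next
    assume h: "m2 < m1 * (1 + m3 / m5)"
    have "k < m1" using h q0 by (simp add: k_def divide_less_eq)
    hence b0p: "b0 > 0" by (simp add: b0_def)
    have d0p: "d0 > 0" using b0p k0 by (simp add: d0_def)
    have bnd: "\<bar>L3 m1 m2 m3 m5 mu\<bar> \<le> 4*\<bar>m5-mu\<bar>/\<bar>b0\<bar>" if "\<bar>mu - m5\<bar> < d0" for mu
      unfolding L3f using case2[OF k0 b0p] d0le[OF that] by blast
    have r0: "L3 m1 m2 m3 m5 m5 = 0" using bnd[of m5] d0p by simp
    show "transcritical (cart_field m1 m2 m3 m5) m5 E1 (E3 m1 m2 m3 m5)"
      unfolding E3e
      by (rule main_gen[OF assms k_def b0_def _ d0p cL3 r0 quad3 bnd]) (use b0p in simp)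
  qed
qed

end
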